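(* Let $f(x)=p(x)/q(x)$ where $p,q$ are real polynomials, $q$ not identically zero, $p$ not identically zero, and $p,q$ have no common real zero. Let $\Omega=\mathbb{R}\setminus\{x\in\mathbb{R}:q(x)=0\}$. Then $f:\Omega\to\mathbb{R}$ is amenable.
   Context: Relative distance on $\mathbb{R}$: $\mathrm{dist}(x,y)=0$ if $x=y=0$, $\mathrm{dist}(x,y)=|\log(y/x)|$ if $xy>0$, and $\mathrm{dist}(x,y)=\infty$ otherwise. For a real analytic function $f$ on an open set $\Omega\subseteq\mathbb{R}$, not identically zero, the condition number is $\kappa(f,x)=0$ if $x=0$, $\kappa(f,x)=\infty$ if $x\neq0$ and $f(x)=0$, and $\kappa(f,x)=|x|\,|f'(x)|/|f(x)|$ otherwise; $\mu(f,x)=1+\kappa(f,x)$. $f:\Omega\to\mathbb{R}$ is amenable if there is $C>0$ such that for every $x\in\Omega$ with $\kappa(f,x)<\infty$, the set $B_x=\{y\in\mathbb{R}:\mathrm{dist}(y,x)<1/(C\mu(f,x))\}$ is contained in $\Omega$ and $\mu(f,y)\leq C\mu(f,x)$ for all $y\in B_x$. *)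

theory Defs
  imports "HOL-Analysis.Analysis" "HOL-Computational_Algebra.Polynomial"
begin

definition rel_dist :: "real \<Rightarrow> real \<Rightarrow> ereal" where
  "rel_dist x y =
     (if x = 0 \<and> y = 0 then 0
      else if x * y > 0 then ereal \<bar>ln (y / x)\<bar>
      else \<infinity>)"

definition cond_num :: "(real \<Rightarrow> real) \<Rightarrow> real \<Rightarrow> ereal" where
  "cond_num f x =
     (if x = 0 then 0
      else if f x = 0 then \<infinity>
      else ereal (\<bar>x\<bar> * \<bar>deriv f x\<bar> / \<bar>f x\<bar>))"

definition mu_num :: "(real \<Rightarrow> real) \<Rightarrow> real \<Rightarrow> ereal" where
  "mu_num f x = 1 + cond_num f x"

definition amenable :: "(real \<Rightarrow> real) \<Rightarrow> real set \<Rightarrow> bool" where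
  "amenable f \<Omega> \<longleftrightarrow>
     (\<exists>C::real. C > 0 \<and>
        (\<forall>x\<in>\<Omega>. cond_num f x < \<infinity> \<longrightarrow>
           {y. rel_dist y x < 1 / (ereal C * mu_num f x)} \<subseteq> \<Omega> \<and>
           (\<forall>y\<in>{y. rel_dist y x < 1 / (ereal C * mu_num f x)}.
              mu_num f y \<le> ereal C * mu_num f x)))"

end

theory Submission
  imports Defs "HOL-Computational_Algebra.Fundamental_Theorem_Algebra"
begin

lemma finite_pos_lb:
  assumes "finite A" "\<forall>a\<in>A. (0::real) < g a"
  shows "\<exists>e>0. \<forall>a\<in>A. e \<le> g a"
  using assms
proof (induction A rule: finite_induct)
  case empty then show ?case by (intro exI[of _ 1]) auto
next
  case (insert a A)
  then obtain e where "e > 0" "\<forall>b\<in>A. e \<le> g b" by auto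
  then show ?case using insert.prems
    by (intro exI[of _ "min e (g a)"]) auto
qed

lemma sum_list_norm_bound:
  fixes h :: "'a \<Rightarrow> 'b::real_normed_vector"
  assumes "\<forall>z\<in>set zs. norm (h z) \<le> B"
  shows "norm (\<Sum>z\<leftarrow>zs. h z) \<le> real (length zs) * B"
  using assms
proof (induction zs)
  case Nil then show ?case by simp
next
  case (Cons a zs)
  have "norm (\<Sum>z\<leftarrow>a#zs. h z) \<le> norm (h a) + norm (\<Sum>z\<leftarrow>zs. h z)"
    by (simp add: norm_triangle_ineq)
  also have "\<dots> \<le> B + real (length zs) * B" using Cons by (intro add_mono) auto
  finally show ?case by (simp add: algebra_simps)
qed

lemma sum_list_split_count:
  fixes h :: "'a \<Rightarrow> 'b::comm_ring_1"
  shows "(\<Sum>z\<leftarrow>zs. h z) = of_nat (count_list zs r) * h r + (\<Sum>z\<leftarrow>filter (\<lambda>z. z \<noteq> r) zs. h z)"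
  by (induction zs) (auto simp: algebra_simps)

lemma complex_factor:
  fixes P :: "complex poly"
  assumes "P \<noteq> 0"
  shows "\<exists>c zs. c \<noteq> 0 \<and> P = smult c (\<Prod>z\<leftarrow>zs. [:-z,1:])"
  using assms
proof (induction "degree P" arbitrary: P rule: less_induct)
  case less
  show ?case
  proof (cases "degree P = 0")
    case True
    then obtain c where "P = [:c:]" using degree_eq_zeroE by blast
    with less.prems show ?thesis by (intro exI[of _ c] exI[of _ "[]"]) auto
  next
    case False
    then have "\<not> constant (poly P)" by (subst constant_degree) (use False in simp)
    then obtain z where "poly P z = 0" using fundamental_theorem_of_algebra by blast
    then obtain P1 where P1: "P = [:-z,1:] * P1" using poly_eq_0_iff_dvd by (metis dvdE)
    with less.prems have "P1 \<noteq> 0" by auto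
    have dg: "degree ([:-z,1:] * P1) = degree [:-z,1:] + degree P1"
      by (rule degree_mult_eq) (use \<open>P1 \<noteq> 0\<close> in auto)
    have "degree P = 1 + degree P1" unfolding P1 dg by simp
    then have "degree P1 < degree P" by simp
    then obtain c zs where "c \<noteq> 0" "P1 = smult c (\<Prod>z\<leftarrow>zs. [:-z,1:])"
      using less.hyps \<open>P1 \<noteq> 0\<close> by blast
    then show ?thesis using P1 by (intro exI[of _ c] exI[of _ "z#zs"]) auto
  qed
qed

lemma prod_roots_iff:
  fixes w :: complex
  shows "poly (\<Prod>z\<leftarrow>zs. [:-z,1:]) w = 0 \<longleftrightarrow> w \<in> set zs"
  by (induction zs) auto

lemma prod_logderiv:
  fixes w :: complex
  assumes "w \<notin> set zs"
  shows "poly (pderiv (\<Prod>z\<leftarrow>zs. [:-z,1:])) w = poly (\<Prod>z\<leftarrow>zs. [:-z,1:]) w * (\<Sum>z\<leftarrow>zs. 1/(w - z))"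
  using assms
proof (induction zs)
  case Nil then show ?case by simp
next
  case (Cons a zs)
  have "w - a \<noteq> 0" using Cons.prems by auto
  have d: "pderiv [:-a, 1:] = 1" by (simp add: pderiv_pCons)
  define R where "R = (\<Prod>z\<leftarrow>zs. [:-z,1:])"
  define S where "S = (\<Sum>z\<leftarrow>zs. 1/(w - z))"
  have IH: "poly (pderiv R) w = poly R w * S" using Cons unfolding R_def S_def by auto
  have eq0: "(\<Prod>z\<leftarrow>a#zs. [:-z,1:]) = [:-a,1:] * R" unfolding R_def by simp
  have eq: "pderiv (\<Prod>z\<leftarrow>a#zs. [:-z,1:]) = [:-a,1:] * pderiv R + R"
    unfolding eq0 by (simp only: pderiv_mult d mult_1_right)
  have L: "poly (pderiv (\<Prod>z\<leftarrow>a#zs. [:-z,1:])) w = (w - a) * (poly R w * S) + poly R w"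
    unfolding eq poly_add poly_mult IH by simp
  have Rr: "poly (\<Prod>z\<leftarrow>a#zs. [:-z,1:]) w = (w - a) * poly R w" unfolding eq0 by (simp add: algebra_simps)
  have Ss: "(\<Sum>z\<leftarrow>a#zs. 1/(w - z)) = 1/(w-a) + S" unfolding S_def by simp
  have alg: "\<And>X. (w-a)*(X*S) + X = ((w-a)*X) * (1/(w-a) + S)"
    using \<open>w - a \<noteq> 0\<close> by (simp add: field_simps)
  show ?case unfolding L Rr Ss by (rule alg)
qed

lemma pderiv_map_of_real:
  "pderiv (map_poly of_real p) = (map_poly of_real (pderiv p) :: complex poly)"
  by (rule poly_eqI) (simp add: coeff_pderiv coeff_map_poly of_real_mult)

lemma poly_map_of_real:
  "poly (map_poly of_real p) (of_real x) = (of_real (poly p x) :: complex)"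
  by (induction p) (auto simp: map_poly_pCons)

definition Tf :: "complex list \<Rightarrow> complex list \<Rightarrow> real \<Rightarrow> complex" where
  "Tf zsP zsQ x = (\<Sum>z\<leftarrow>zsP. of_real x / (of_real x - z)) - (\<Sum>z\<leftarrow>zsQ. of_real x / (of_real x - z))"

lemma F1:
  fixes x d :: real and zs :: "complex list"
  assumes "x \<noteq> 0" "0 < d" "d \<le> 1" "\<forall>z\<in>set zs. z \<noteq> 0 \<longrightarrow> d \<le> cmod (of_real x - z) / \<bar>x\<bar>"
  shows "cmod (\<Sum>z\<leftarrow>zs. of_real x / (of_real x - z)) \<le> real (length zs) / d"
proof -
  have "\<forall>z\<in>set zs. cmod (of_real x / (of_real x - z)) \<le> 1 / d"
  proof
    fix z assume z: "z \<in> set zs"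
    show "cmod (of_real x / (of_real x - z)) \<le> 1 / d"
    proof (cases "z = 0")
      case True
      then show ?thesis using assms by simp
    next
      case False
      then have "d \<le> cmod (of_real x - z) / \<bar>x\<bar>" using assms z by auto
      then have h: "d * \<bar>x\<bar> \<le> cmod (of_real x - z)" using assms by (simp add: field_simps)
      then have pos: "cmod (of_real x - z) > 0" using assms by (smt (verit) mult_pos_pos zero_less_abs_iff)
      have "cmod (of_real x / (of_real x - z)) = \<bar>x\<bar> / cmod (of_real x - z)"
        by (simp add: norm_divide)
      also have "\<dots> \<le> 1 / d" using h pos assms by (simp add: field_simps)
      finally show ?thesis .
    qed
  qed
  from sum_list_norm_bound[OF this] show ?thesis by simp
qed

lemma T_bound:
  fixes x d :: real
  assumes "x \<noteq> 0" "0 < d" "d \<le> 1" "\<forall>z\<in>set zsP \<union> set zsQ. z \<noteq> 0 \<longrightarrow> d \<le> cmod (of_real x - z) / \<bar>x\<bar>"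
  shows "cmod (Tf zsP zsQ x) \<le> real (length zsP + length zsQ) / d"
proof -
  have "cmod (Tf zsP zsQ x) \<le> cmod (\<Sum>z\<leftarrow>zsP. of_real x / (of_real x - z)) + cmod (\<Sum>z\<leftarrow>zsQ. of_real x / (of_real x - z))"
    unfolding Tf_def by (rule norm_triangle_ineq4)
  also have "\<dots> \<le> real (length zsP) / d + real (length zsQ) / d"
    using assms by (intro add_mono F1) auto
  finally show ?thesis by (simp add: add_divide_distrib)
qed

lemma F2:
  fixes x d e :: real and r :: complex
  assumes "x \<noteq> 0" "0 < e" "e \<le> 1/2"
    and b: "\<forall>z\<in>(set zsP \<union> set zsQ) - {0}. Im z \<noteq> 0 \<longrightarrow> 2*e*cmod z \<le> \<bar>Im z\<bar>"
    and c: "\<forall>z\<in>(set zsP \<union> set zsQ) - {0}. \<forall>w\<in>(set zsP \<union> set zsQ) - {0}. z \<noteq> w \<longrightarrow> 4*e*cmod w \<le> cmod (z - w)"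
    and cnt: "\<forall>r\<in>(set zsP \<union> set zsQ) - {0}. Im r = 0 \<longrightarrow> count_list zsP r \<noteq> count_list zsQ r"
    and r: "r \<in> (set zsP \<union> set zsQ) - {0}"
    and dd: "d = cmod (of_real x - r) / \<bar>x\<bar>" "d < e" "0 < d"
  shows "cmod (Tf zsP zsQ x) \<ge> 1/d - real (length zsP + length zsQ) / e"
proof -
  define X where "X = (complex_of_real x)"
  have nx: "cmod X = \<bar>x\<bar>" unfolding X_def by simp
  have ax: "\<bar>x\<bar> > 0" using assms by simp
  have h1: "cmod (X - r) = d * \<bar>x\<bar>" using dd ax unfolding X_def by simp
  have tri: "cmod X \<le> cmod (X - r) + cmod r" using norm_triangle_sub[of X r] by simp
  have dx: "d * \<bar>x\<bar> < e * \<bar>x\<bar>" using mult_strict_right_mono[OF dd(2) ax] .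
  have "e * \<bar>x\<bar> \<le> (1/2) * \<bar>x\<bar>" using \<open>e \<le> 1/2\<close> ax by (intro mult_right_mono) auto
  then have h2: "\<bar>x\<bar> < 2 * cmod r"
    using tri nx h1 dx by linarith
  have h3: "Im r = 0"
  proof (rule ccontr)
    assume "Im r \<noteq> 0"
    then have "2*e*cmod r \<le> \<bar>Im r\<bar>" using b r by auto
    moreover have "\<bar>Im r\<bar> \<le> cmod (X - r)" using abs_Im_le_cmod[of "X - r"] unfolding X_def by simp
    moreover have "e * \<bar>x\<bar> \<le> e * (2 * cmod r)" using h2 \<open>e > 0\<close> by simp
    ultimately show False using h1 dx by simp
  qed
  define h where "h z = X / (X - z)" for z
  define cP where "cP = count_list zsP r"
  define cQ where "cQ = count_list zsQ r"
  have cPQ: "cP \<noteq> cQ" using cnt r h3 unfolding cP_def cQ_def by auto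
  have far: "cmod (h z) \<le> 1/e" if z: "z \<in> set zsP \<union> set zsQ" "z \<noteq> r" for z
  proof (cases "z = 0")
    case True
    then show ?thesis using ax \<open>e \<le> 1/2\<close> \<open>e > 0\<close> unfolding h_def X_def by (simp add: field_simps)
  next
    case False
    then have "4*e*cmod r \<le> cmod (z - r)" using c r z by auto
    moreover have "cmod (z - r) \<le> cmod (X - z) + cmod (X - r)"
      by (metis norm_triangle_sub norm_minus_commute diff_diff_eq2 add.commute
           norm_triangle_ineq4 diff_add_cancel)
    moreover have "e * \<bar>x\<bar> \<le> e * (2 * cmod r)" using h2 \<open>e > 0\<close> by simp
    ultimately have g: "e * \<bar>x\<bar> \<le> cmod (X - z)" using h1 dx by simp
    then have pos: "cmod (X - z) > 0" using ax \<open>e > 0\<close> by (smt (verit) mult_pos_pos)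
    have "cmod (h z) = \<bar>x\<bar> / cmod (X - z)" unfolding h_def by (simp add: norm_divide nx)
    also have "\<dots> \<le> 1 / e" using g pos \<open>e > 0\<close> by (simp add: field_simps)
    finally show ?thesis .
  qed
  define EP where "EP = (\<Sum>z\<leftarrow>filter (\<lambda>z. z \<noteq> r) zsP. h z)"
  define EQ where "EQ = (\<Sum>z\<leftarrow>filter (\<lambda>z. z \<noteq> r) zsQ. h z)"
  have T: "Tf zsP zsQ x = (of_nat cP - of_nat cQ) * h r + (EP - EQ)"
    unfolding Tf_def X_def[symmetric] h_def[symmetric] EP_def EQ_def cP_def cQ_def
    using sum_list_split_count[of h zsP r] sum_list_split_count[of h zsQ r]
    by (simp add: algebra_simps)
  have EPb: "cmod EP \<le> real (length zsP) * (1/e)"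
  proof -
    have "cmod EP \<le> real (length (filter (\<lambda>z. z \<noteq> r) zsP)) * (1/e)"
      unfolding EP_def using far by (intro sum_list_norm_bound) auto
    also have "\<dots> \<le> real (length zsP) * (1/e)" using \<open>e > 0\<close>
      by (intro mult_right_mono) auto
    finally show ?thesis .
  qed
  have EQb: "cmod EQ \<le> real (length zsQ) * (1/e)"
  proof -
    have "cmod EQ \<le> real (length (filter (\<lambda>z. z \<noteq> r) zsQ)) * (1/e)"
      unfolding EQ_def using far by (intro sum_list_norm_bound) auto
    also have "\<dots> \<le> real (length zsQ) * (1/e)" using \<open>e > 0\<close>
      by (intro mult_right_mono) auto
    finally show ?thesis .
  qed
  have E: "cmod (EP - EQ) \<le> real (length zsP + length zsQ) / e"
    using norm_triangle_ineq4[of EP EQ] EPb EQb by (simp add: add_divide_distrib)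
  have hr: "cmod (h r) = 1 / d"
    unfolding h_def using h1 nx ax dd by (simp add: norm_divide)
  have m: "cmod (of_nat cP - of_nat cQ :: complex) \<ge> 1"
  proof -
    have "(of_nat cP - of_nat cQ :: complex) = of_real (real cP - real cQ)" by simp
    then have "cmod (of_nat cP - of_nat cQ :: complex) = \<bar>real cP - real cQ\<bar>"
      by (simp only: norm_of_real)
    then show ?thesis using cPQ by linarith
  qed
  have A: "cmod ((of_nat cP - of_nat cQ) * h r) \<ge> 1/d"
    unfolding norm_mult hr using mult_right_mono[OF m, of "1/d"] dd(3) by simp
  have "cmod (Tf zsP zsQ x) \<ge> cmod ((of_nat cP - of_nat cQ) * h r) - cmod (EP - EQ)"
    unfolding T using norm_diff_ineq[of "(of_nat cP - of_nat cQ) * h r" "EP - EQ"] by simp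
  then show ?thesis using A E by linarith
qed

lemma exp_window:
  fixes s t :: real
  assumes "s > 0" "\<bar>ln s\<bar> < t" "t \<le> 1/2"
  shows "\<bar>s - 1\<bar> \<le> 2 * t"
proof -
  have t0: "t > 0" using assms by linarith
  have s: "s = exp (ln s)" using assms by simp
  have "-t \<le> ln s" "ln s \<le> t" using assms by auto
  then have "exp (-t) \<le> exp (ln s)" "exp (ln s) \<le> exp t" by simp_all
  then have lo: "exp (-t) \<le> s" and hi: "s \<le> exp t" using assms by simp_all
  have e1: "1 - t \<le> exp (-t)" using exp_ge_add_one_self[of "-t"] by simp
  have "exp t * exp (-t) = 1" by (simp add: exp_minus)
  moreover have "1 = (1 + 2*t) * (1 - t) - t * (1 - 2*t)" by (simp add: algebra_simps)
  moreover have "t * (1 - 2*t) \<ge> 0" using t0 assms by simp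
  ultimately have "exp t * exp (-t) \<le> (1 + 2*t) * exp (-t)"
    using e1 t0 by (smt (verit) mult_left_mono)
  then have "exp t \<le> 1 + 2*t" by simp
  then show ?thesis using lo hi e1 by linarith
qed

lemma core:
  fixes zsP zsQ :: "complex list"
  assumes cnt: "\<forall>r\<in>(set zsP \<union> set zsQ) - {0}. Im r = 0 \<longrightarrow> count_list zsP r \<noteq> count_list zsQ r"
  shows "\<exists>C\<ge>8. \<forall>x::real. x \<noteq> 0 \<longrightarrow> complex_of_real x \<notin> set zsP \<union> set zsQ \<longrightarrow>
     (\<forall>y. x * y > 0 \<longrightarrow> \<bar>ln (x / y)\<bar> < 1 / (C * (1 + cmod (Tf zsP zsQ x))) \<longrightarrow>
        complex_of_real y \<notin> set zsP \<union> set zsQ \<and>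
        1 + cmod (Tf zsP zsQ y) \<le> C * (1 + cmod (Tf zsP zsQ x)))"
proof -
  define Z where "Z = (set zsP \<union> set zsQ) - {0}"
  have finZ: "finite Z" unfolding Z_def by simp
  obtain e1 where e1: "e1 > 0" "\<forall>z\<in>Z. e1 \<le> (if Im z \<noteq> 0 then \<bar>Im z\<bar> / (2 * cmod z) else 1)"
  proof -
    have "\<forall>z\<in>Z. 0 < (if Im z \<noteq> 0 then \<bar>Im z\<bar> / (2 * cmod z) else (1::real))"
    proof
      fix z assume "z \<in> Z"
      then have "cmod z > 0" unfolding Z_def by auto
      then show "0 < (if Im z \<noteq> 0 then \<bar>Im z\<bar> / (2 * cmod z) else (1::real))" by auto
    qed
    from finite_pos_lb[OF finZ this] show ?thesis using that by blast
  qed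
  obtain e2 where e2: "e2 > 0" "\<forall>zw\<in>Z \<times> Z. e2 \<le> (if fst zw \<noteq> snd zw then cmod (fst zw - snd zw) / (4 * cmod (snd zw)) else 1)"
  proof -
    have "\<forall>zw\<in>Z \<times> Z. 0 < (if fst zw \<noteq> snd zw then cmod (fst zw - snd zw) / (4 * cmod (snd zw)) else (1::real))"
    proof
      fix zw assume "zw \<in> Z \<times> Z"
      then have "cmod (snd zw) > 0" unfolding Z_def by auto
      then show "0 < (if fst zw \<noteq> snd zw then cmod (fst zw - snd zw) / (4 * cmod (snd zw)) else (1::real))" by auto
    qed
    from finite_pos_lb[OF _ this] finZ show ?thesis using that by blast
  qed
  define e where "e = min (1/2) (min e1 e2)"
  have e0: "e > 0" "e \<le> 1/2" unfolding e_def using e1 e2 by auto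
  have b: "\<forall>z\<in>Z. Im z \<noteq> 0 \<longrightarrow> 2*e*cmod z \<le> \<bar>Im z\<bar>"
  proof (intro ballI impI)
    fix z assume z: "z \<in> Z" "Im z \<noteq> 0"
    then have "e \<le> \<bar>Im z\<bar> / (2 * cmod z)" using e1 unfolding e_def by force
    moreover have "cmod z > 0" using z unfolding Z_def by auto
    ultimately show "2*e*cmod z \<le> \<bar>Im z\<bar>" by (simp add: field_simps)
  qed
  have c: "\<forall>z\<in>Z. \<forall>w\<in>Z. z \<noteq> w \<longrightarrow> 4*e*cmod w \<le> cmod (z - w)"
  proof (intro ballI impI)
    fix z w assume z: "z \<in> Z" "w \<in> Z" "z \<noteq> w"
    then have "e \<le> cmod (z - w) / (4 * cmod w)" using e2(2) unfolding e_def
      by (smt (verit, best) fst_conv mem_Sigma_iff snd_conv)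
    moreover have "cmod w > 0" using z unfolding Z_def by auto
    ultimately show "4*e*cmod w \<le> cmod (z - w)" by (simp add: field_simps)
  qed
  define N where "N = real (length zsP + length zsQ)"
  have N0: "N \<ge> 0" unfolding N_def by simp
  define \<delta> where "\<delta> x = Min (insert 1 ((\<lambda>z. cmod (complex_of_real x - z) / \<bar>x\<bar>) ` Z))" for x
  have fin: "finite (insert 1 ((\<lambda>z. cmod (complex_of_real x - z) / \<bar>x\<bar>) ` Z))" for x
    using finZ by simp
  have \<delta>1: "\<delta> x \<le> 1" for x unfolding \<delta>_def using fin by (intro Min_le) auto
  have \<delta>le: "\<delta> x \<le> cmod (complex_of_real x - z) / \<bar>x\<bar>" if "z \<in> Z" for x z
    unfolding \<delta>_def using fin that by (intro Min_le) auto
  have \<delta>pos: "\<delta> x > 0" if "x \<noteq> 0" "complex_of_real x \<notin> Z" for x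
    unfolding \<delta>_def using fin that by (subst Min_gr_iff) (auto intro!: divide_pos_pos)
  have \<delta>in: "\<exists>r\<in>Z. \<delta> x = cmod (complex_of_real x - r) / \<bar>x\<bar>" if "\<delta> x < 1" for x
  proof -
    have "\<delta> x \<in> insert 1 ((\<lambda>z. cmod (complex_of_real x - z) / \<bar>x\<bar>) ` Z)"
      unfolding \<delta>_def using fin by (intro Min_in) auto
    then show ?thesis using that by auto
  qed
  define \<eta> where "\<eta> = e / (2*N + 2)"
  have \<eta>0: "\<eta> > 0" "\<eta> \<le> e/2" unfolding \<eta>_def using e0 N0 by (auto simp: field_simps)
  define C where "C = 8 + 8*N + (4 + 4*N)/\<eta>"
  have C8: "C \<ge> 8" unfolding C_def using N0 \<eta>0 by simp
  have Ceta: "C * \<eta> \<ge> 4 + 4*N" unfolding C_def using N0 \<eta>0 by (simp add: field_simps)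
  have "\<forall>x::real. x \<noteq> 0 \<longrightarrow> complex_of_real x \<notin> set zsP \<union> set zsQ \<longrightarrow>
     (\<forall>y. x * y > 0 \<longrightarrow> \<bar>ln (x / y)\<bar> < 1 / (C * (1 + cmod (Tf zsP zsQ x))) \<longrightarrow>
        complex_of_real y \<notin> set zsP \<union> set zsQ \<and>
        1 + cmod (Tf zsP zsQ y) \<le> C * (1 + cmod (Tf zsP zsQ x)))"
  proof (intro allI impI)
    fix x y :: real
    assume x0: "x \<noteq> 0" and xZ: "complex_of_real x \<notin> set zsP \<union> set zsQ"
      and xy: "x * y > 0" and ln: "\<bar>ln (x / y)\<bar> < 1 / (C * (1 + cmod (Tf zsP zsQ x)))"
    define d where "d = \<delta> x"
    define \<mu> where "\<mu> = 1 + cmod (Tf zsP zsQ x)"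
    have ax: "\<bar>x\<bar> > 0" using x0 by simp
    have d0: "d > 0" unfolding d_def using x0 xZ by (intro \<delta>pos) (auto simp: Z_def)
    have d1: "d \<le> 1" unfolding d_def by (rule \<delta>1)
    have dle: "d \<le> cmod (complex_of_real x - z) / \<bar>x\<bar>" if "z \<in> Z" for z
      unfolding d_def using \<delta>le that .
    have mu1: "\<mu> \<ge> 1" unfolding \<mu>_def by simp
    have key: "4 \<le> C * \<mu> * d \<and> 1 + 4*N/d \<le> C * \<mu>"
    proof (cases "d \<le> \<eta>")
      case True
      then have "d < e" using \<eta>0 e0 by linarith
      then have "d < 1" using e0 by linarith
      then obtain r where r: "r \<in> Z" "d = cmod (complex_of_real x - r) / \<bar>x\<bar>"
        using \<delta>in unfolding d_def by blast
      have k: "cmod (Tf zsP zsQ x) \<ge> 1/d - N/e"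
        unfolding N_def
        by (rule F2[OF x0 e0 _ _ cnt r(1)[unfolded Z_def] r(2) \<open>d < e\<close> d0])
           (use b c in \<open>auto simp: Z_def\<close>)
      have "d * (2*N + 2) \<le> e" using True \<eta>0 N0 unfolding \<eta>_def by (simp add: field_simps)
      then have "2 * d * N \<le> e" using d0 by (simp add: algebra_simps)
      then have "N/e \<le> 1/(2*d)" using d0 e0 by (simp add: field_simps)
      then have muge: "\<mu> \<ge> 1/(2*d)" using k unfolding \<mu>_def by linarith
      have A: "C * \<mu> * d \<ge> C * (1/(2*d)) * d"
        using muge C8 d0 by (intro mult_right_mono mult_left_mono) auto
      have B: "C * (1/(2*d)) * d = C/2" using d0 by simp
      have "1 + 4*N/d \<le> 1/d + 4*N/d" using d0 d1 by (simp add: field_simps)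
      also have "\<dots> = (1 + 4*N)/d" by (simp add: add_divide_distrib)
      also have "\<dots> \<le> (C/2)/d" using d0 C8 unfolding C_def using \<eta>0 N0
        by (intro divide_right_mono) (auto simp: field_simps)
      also have "\<dots> = C * (1/(2*d))" by simp
      also have "\<dots> \<le> C * \<mu>" using muge C8 by (intro mult_left_mono) auto
      finally show ?thesis using A B C8 by linarith
    next
      case False
      have "C * \<mu> * d \<ge> C * 1 * \<eta>"
        using False mu1 C8 \<eta>0 by (intro mult_mono) auto
      then have A: "C * \<mu> * d \<ge> 4" using Ceta N0 by linarith
      have "4*N/d \<le> 4*N/\<eta>" using False \<eta>0 N0 by (intro divide_left_mono) auto
      moreover have "1 + 4*N/\<eta> \<le> C" unfolding C_def using N0 \<eta>0 by (simp add: field_simps)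
      moreover have "C \<le> C * \<mu>" using mu1 C8 by simp
      ultimately show ?thesis using A by linarith
    qed
    define \<tau> where "\<tau> = 1 / (C * \<mu>)"
    have tau0: "\<tau> > 0" unfolding \<tau>_def using C8 mu1 by simp
    have "C * \<mu> \<ge> 8 * 1" using C8 mu1 by (intro mult_mono) auto
    then have tau8: "\<tau> \<le> 1/8" unfolding \<tau>_def by (simp add: field_simps)
    have tau_d: "2 * \<tau> \<le> d / 2" using key tau0 C8 mu1 unfolding \<tau>_def by (simp add: field_simps)
    have s0: "y / x > 0" using xy by (auto simp add: zero_less_divide_iff zero_less_mult_iff)
    have "ln (y / x) = - ln (x / y)"
      using s0 ln_inverse[of "x / y"] by (simp add: inverse_eq_divide)
    then have "\<bar>ln (y / x)\<bar> < \<tau>" using ln unfolding \<tau>_def \<mu>_def by simp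
    then have sw: "\<bar>y / x - 1\<bar> \<le> 2 * \<tau>" using exp_window[OF s0] tau8 by simp
    have yx: "\<bar>y - x\<bar> = \<bar>x\<bar> * \<bar>y / x - 1\<bar>" using x0
      by (simp add: abs_mult[symmetric] algebra_simps)
    have yx2: "\<bar>y - x\<bar> \<le> d * \<bar>x\<bar> / 2"
    proof -
      have "\<bar>y - x\<bar> \<le> \<bar>x\<bar> * (2 * \<tau>)" unfolding yx using sw ax by (intro mult_left_mono) auto
      also have "\<dots> \<le> \<bar>x\<bar> * (d / 2)" using tau_d ax by (intro mult_left_mono) auto
      finally show ?thesis by (simp add: mult.commute)
    qed
    have y0: "y \<noteq> 0" using xy by auto
    have yfar: "cmod (complex_of_real y - z) \<ge> d * \<bar>x\<bar> / 2" if z: "z \<in> Z" for z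
    proof -
      have "d * \<bar>x\<bar> \<le> cmod (complex_of_real x - z)" using dle[OF z] ax by (simp add: field_simps)
      moreover have "cmod (complex_of_real x - z) \<le> cmod (complex_of_real y - z) + cmod (complex_of_real x - complex_of_real y)"
        using norm_triangle_ineq[of "complex_of_real y - z" "complex_of_real x - complex_of_real y"] by simp
      moreover have "cmod (complex_of_real x - complex_of_real y) = \<bar>y - x\<bar>"
        by (metis norm_of_real of_real_diff norm_minus_commute)
      ultimately show ?thesis using yx2 by linarith
    qed
    have yZ: "complex_of_real y \<notin> set zsP \<union> set zsQ"
    proof
      assume "complex_of_real y \<in> set zsP \<union> set zsQ"
      then have "complex_of_real y \<in> Z" using y0 unfolding Z_def by auto
      from yfar[OF this] have "d * \<bar>x\<bar> / 2 \<le> 0" by simp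
      moreover have "d * \<bar>x\<bar> > 0" using d0 ax by simp
      ultimately show False by simp
    qed
    have "d * \<bar>x\<bar> \<le> 1 * \<bar>x\<bar>" using d1 ax by (intro mult_right_mono) auto
    then have ay: "\<bar>y\<bar> \<le> 2 * \<bar>x\<bar>" using yx2 by linarith
    have ay0: "\<bar>y\<bar> > 0" using y0 by simp
    have dy: "\<forall>z\<in>set zsP \<union> set zsQ. z \<noteq> 0 \<longrightarrow> d/4 \<le> cmod (complex_of_real y - z) / \<bar>y\<bar>"
    proof (intro ballI impI)
      fix z assume "z \<in> set zsP \<union> set zsQ" "z \<noteq> 0"
      then have z: "z \<in> Z" unfolding Z_def by auto
      have "d/4 * \<bar>y\<bar> \<le> d/4 * (2 * \<bar>x\<bar>)" using ay d0 by (intro mult_left_mono) auto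
      also have "\<dots> = d * \<bar>x\<bar> / 2" by simp
      also have "\<dots> \<le> cmod (complex_of_real y - z)" using yfar[OF z] .
      finally show "d/4 \<le> cmod (complex_of_real y - z) / \<bar>y\<bar>" using ay0 by (simp add: field_simps)
    qed
    have "cmod (Tf zsP zsQ y) \<le> N / (d/4)" unfolding N_def
      by (rule T_bound[OF y0 _ _ dy]) (use d0 d1 in auto)
    then have "1 + cmod (Tf zsP zsQ y) \<le> 1 + 4*N/d" by (simp add: mult.commute)
    then show "complex_of_real y \<notin> set zsP \<union> set zsQ \<and>
        1 + cmod (Tf zsP zsQ y) \<le> C * (1 + cmod (Tf zsP zsQ x))"
      using yZ key unfolding \<mu>_def by linarith
  qed
  then show ?thesis using C8 by blast
qed

lemma real_poly_factor:
  fixes p :: "real poly"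
  assumes "p \<noteq> 0"
  shows "\<exists>zs. (\<forall>a. poly p a = 0 \<longleftrightarrow> complex_of_real a \<in> set zs) \<and>
     (\<forall>a. poly p a \<noteq> 0 \<longrightarrow> complex_of_real (poly (pderiv p) a / poly p a) = (\<Sum>z\<leftarrow>zs. 1 / (complex_of_real a - z)))"
proof -
  define P where "P = (map_poly complex_of_real p)"
  have "P \<noteq> 0" unfolding P_def using assms by (subst map_poly_eq_0_iff) auto
  then obtain c zs where c: "c \<noteq> 0" and P: "P = smult c (\<Prod>z\<leftarrow>zs. [:-z,1:])"
    using complex_factor by blast
  define R where "R = (\<Prod>z\<leftarrow>zs. [:-z,1:])"
  have ev: "complex_of_real (poly p a) = c * poly R (complex_of_real a)" for a
    using poly_map_of_real[of p a] unfolding P_def[symmetric] P R_def by simp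
  have evd: "complex_of_real (poly (pderiv p) a) = c * poly (pderiv R) (complex_of_real a)" for a
    using poly_map_of_real[of "pderiv p" a] unfolding pderiv_map_of_real[symmetric] P_def[symmetric] P R_def
    by (simp add: pderiv_smult)
  have roots: "poly p a = 0 \<longleftrightarrow> complex_of_real a \<in> set zs" for a
  proof -
    have "poly p a = 0 \<longleftrightarrow> complex_of_real (poly p a) = 0" by simp
    also have "\<dots> \<longleftrightarrow> poly R (complex_of_real a) = 0" unfolding ev using c by simp
    also have "\<dots> \<longleftrightarrow> complex_of_real a \<in> set zs" unfolding R_def by (rule prod_roots_iff)
    finally show ?thesis .
  qed
  have "complex_of_real (poly (pderiv p) a / poly p a) = (\<Sum>z\<leftarrow>zs. 1 / (complex_of_real a - z))"
    if pa: "poly p a \<noteq> 0" for a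
  proof -
    have nz: "complex_of_real a \<notin> set zs" using roots pa by blast
    have Rnz: "poly R (complex_of_real a) \<noteq> 0" using nz unfolding R_def prod_roots_iff .
    have "complex_of_real (poly (pderiv p) a / poly p a) = (c * poly (pderiv R) (complex_of_real a)) / (c * poly R (complex_of_real a))"
      by (simp add: ev evd)
    also have "\<dots> = (c * (poly R (complex_of_real a) * (\<Sum>z\<leftarrow>zs. 1 / (complex_of_real a - z)))) / (c * poly R (complex_of_real a))"
      unfolding R_def prod_logderiv[OF nz] ..
    also have "\<dots> = (\<Sum>z\<leftarrow>zs. 1 / (complex_of_real a - z))" using c Rnz by simp
    finally show ?thesis .
  qed
  with roots show ?thesis by blast
qed

lemma link:
  fixes p q :: "real poly" and zsP zsQ :: "complex list" and x :: real
  assumes "\<forall>a. poly p a \<noteq> 0 \<longrightarrow> complex_of_real (poly (pderiv p) a / poly p a) = (\<Sum>z\<leftarrow>zsP. 1 / (complex_of_real a - z))"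
    and "\<forall>a. poly q a \<noteq> 0 \<longrightarrow> complex_of_real (poly (pderiv q) a / poly q a) = (\<Sum>z\<leftarrow>zsQ. 1 / (complex_of_real a - z))"
    and px: "poly p x \<noteq> 0" and qx: "poly q x \<noteq> 0"
  shows "\<bar>x\<bar> * \<bar>deriv (\<lambda>x. poly p x / poly q x) x\<bar> / \<bar>poly p x / poly q x\<bar> = cmod (Tf zsP zsQ x)"
proof -
  have D: "((\<lambda>x. poly p x / poly q x) has_field_derivative
      (poly (pderiv p) x * poly q x - poly p x * poly (pderiv q) x) / (poly q x * poly q x)) (at x)"
    by (rule DERIV_divide[OF poly_DERIV poly_DERIV qx])
  have d: "deriv (\<lambda>x. poly p x / poly q x) x = (poly (pderiv p) x * poly q x - poly p x * poly (pderiv q) x) / (poly q x * poly q x)"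
    using DERIV_imp_deriv[OF D] .
  have e: "x * deriv (\<lambda>x. poly p x / poly q x) x / (poly p x / poly q x) =
      x * (poly (pderiv p) x / poly p x - poly (pderiv q) x / poly q x)"
    unfolding d using px qx by (simp add: field_simps)
  have "complex_of_real (x * deriv (\<lambda>x. poly p x / poly q x) x / (poly p x / poly q x)) = Tf zsP zsQ x"
  proof -
    define X where "X = complex_of_real x"
    have hP: "complex_of_real (poly (pderiv p) x / poly p x) = (\<Sum>z\<leftarrow>zsP. 1 / (X - z))"
      using assms(1) px unfolding X_def by blast
    have hQ: "complex_of_real (poly (pderiv q) x / poly q x) = (\<Sum>z\<leftarrow>zsQ. 1 / (X - z))"
      using assms(2) qx unfolding X_def by blast
    have sl: "(\<Sum>z\<leftarrow>zs. X / (X - z)) = X * (\<Sum>z\<leftarrow>zs. 1 / (X - z))" for zs :: "complex list"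
      by (induction zs) (auto simp: algebra_simps)
    have "complex_of_real (x * (poly (pderiv p) x / poly p x - poly (pderiv q) x / poly q x))
        = X * (complex_of_real (poly (pderiv p) x / poly p x) - complex_of_real (poly (pderiv q) x / poly q x))"
      unfolding X_def by (simp only: of_real_mult of_real_diff)
    also have "\<dots> = Tf zsP zsQ x" unfolding hP hQ Tf_def X_def[symmetric] sl by (simp add: algebra_simps)
    finally show ?thesis unfolding e .
  qed
  then have "cmod (Tf zsP zsQ x) = \<bar>x * deriv (\<lambda>x. poly p x / poly q x) x / (poly p x / poly q x)\<bar>"
    by (metis norm_of_real)
  then show ?thesis by (simp add: abs_mult)
qed

theorem mainTheorem7:
  fixes p q :: "real poly"
  assumes "p \<noteq> 0" and "q \<noteq> 0"
    and "\<And>x. poly q x = 0 \<Longrightarrow> poly p x \<noteq> 0"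
  shows "amenable (\<lambda>x. poly p x / poly q x) {x. poly q x \<noteq> 0}"
proof -
  obtain zsP where zP: "\<forall>a. poly p a = 0 \<longleftrightarrow> complex_of_real a \<in> set zsP"
     "\<forall>a. poly p a \<noteq> 0 \<longrightarrow> complex_of_real (poly (pderiv p) a / poly p a) = (\<Sum>z\<leftarrow>zsP. 1 / (complex_of_real a - z))"
    using real_poly_factor[OF assms(1)] by blast
  obtain zsQ where zQ: "\<forall>a. poly q a = 0 \<longleftrightarrow> complex_of_real a \<in> set zsQ"
     "\<forall>a. poly q a \<noteq> 0 \<longrightarrow> complex_of_real (poly (pderiv q) a / poly q a) = (\<Sum>z\<leftarrow>zsQ. 1 / (complex_of_real a - z))"
    using real_poly_factor[OF assms(2)] by blast
  have cnt: "\<forall>r\<in>(set zsP \<union> set zsQ) - {0}. Im r = 0 \<longrightarrow> count_list zsP r \<noteq> count_list zsQ r"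
  proof (intro ballI impI)
    fix r assume r: "r \<in> (set zsP \<union> set zsQ) - {0}" and im: "Im r = 0"
    define a where "a = Re r"
    have ra: "r = complex_of_real a" unfolding a_def using im by (simp add: complex_eq_iff)
    show "count_list zsP r \<noteq> count_list zsQ r"
    proof (cases "r \<in> set zsP")
      case True
      then have "poly p a = 0" using zP ra by auto
      then have "poly q a \<noteq> 0" using assms(3) by blast
      then have "r \<notin> set zsQ" using zQ ra by auto
      then show ?thesis using True by (simp add: count_list_0_iff)
    next
      case False
      then have "r \<in> set zsQ" using r by auto
      then show ?thesis using False by (simp add: count_list_0_iff)
    qed
  qed
  obtain C where C8: "C \<ge> 8" and CC: "\<forall>x::real. x \<noteq> 0 \<longrightarrow> complex_of_real x \<notin> set zsP \<union> set zsQ \<longrightarrow>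
     (\<forall>y. x * y > 0 \<longrightarrow> \<bar>ln (x / y)\<bar> < 1 / (C * (1 + cmod (Tf zsP zsQ x))) \<longrightarrow>
        complex_of_real y \<notin> set zsP \<union> set zsQ \<and>
        1 + cmod (Tf zsP zsQ y) \<le> C * (1 + cmod (Tf zsP zsQ x)))"
    using core[OF cnt] by blast
  define f where "f = (\<lambda>x. poly p x / poly q x)"
  have mu: "mu_num f x = ereal (1 + cmod (Tf zsP zsQ x))" if "x \<noteq> 0" "poly p x \<noteq> 0" "poly q x \<noteq> 0" for x
  proof -
    have "cond_num f x = ereal (cmod (Tf zsP zsQ x))"
      unfolding cond_num_def f_def using that link[OF zP(2) zQ(2) that(2,3)] by simp
    then show ?thesis unfolding mu_num_def by simp
  qed
  have main: "{y. rel_dist y x < 1 / (ereal C * mu_num f x)} \<subseteq> {x. poly q x \<noteq> 0} \<and>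
       (\<forall>y\<in>{y. rel_dist y x < 1 / (ereal C * mu_num f x)}. mu_num f y \<le> ereal C * mu_num f x)"
    if xO: "x \<in> {x. poly q x \<noteq> 0}" and fin: "cond_num f x < \<infinity>" for x
  proof -
    show "{y. rel_dist y x < 1 / (ereal C * mu_num f x)} \<subseteq> {x. poly q x \<noteq> 0} \<and>
       (\<forall>y\<in>{y. rel_dist y x < 1 / (ereal C * mu_num f x)}. mu_num f y \<le> ereal C * mu_num f x)"
    proof (cases "x = 0")
      case True
      have m0: "mu_num f x = 1" unfolding mu_num_def cond_num_def using True by simp
      have ball: "{y. rel_dist y x < 1 / (ereal C * mu_num f x)} \<subseteq> {0}"
        unfolding m0 using True C8 by (auto simp: rel_dist_def)
      show ?thesis using ball xO True m0 C8 by auto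
    next
      case False
      have fx: "f x \<noteq> 0" using fin False unfolding cond_num_def by auto
      have qx: "poly q x \<noteq> 0" using xO by simp
      have px: "poly p x \<noteq> 0" using fx unfolding f_def by auto
      have xZ: "complex_of_real x \<notin> set zsP \<union> set zsQ" using zP zQ px qx by auto
      define \<mu> where "\<mu> = 1 + cmod (Tf zsP zsQ x)"
      have mu1: "\<mu> \<ge> 1" unfolding \<mu>_def by simp
      have mx: "mu_num f x = ereal \<mu>" unfolding \<mu>_def using mu[OF False px qx] .
      have inv: "1 / (ereal C * mu_num f x) = ereal (1 / (C * \<mu>))"
        unfolding mx using C8 mu1 by (simp add: divide_ereal_def one_ereal_def) (simp add: field_simps)
      have yprop: "x * y > 0 \<and> \<bar>ln (x / y)\<bar> < 1 / (C * \<mu>)"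
        if "rel_dist y x < 1 / (ereal C * mu_num f x)" for y
        using that False unfolding inv rel_dist_def by (auto split: if_splits simp: mult.commute)
      have good: "poly q y \<noteq> 0 \<and> mu_num f y \<le> ereal C * mu_num f x"
        if "rel_dist y x < 1 / (ereal C * mu_num f x)" for y
      proof -
        have y: "x * y > 0" "\<bar>ln (x / y)\<bar> < 1 / (C * \<mu>)" using yprop[OF that] by auto
        from CC False xZ y have yZ: "complex_of_real y \<notin> set zsP \<union> set zsQ"
          and le: "1 + cmod (Tf zsP zsQ y) \<le> C * \<mu>" unfolding \<mu>_def by blast+
        have y0: "y \<noteq> 0" using y by auto
        have py: "poly p y \<noteq> 0" and qy: "poly q y \<noteq> 0" using yZ zP zQ by auto
        have "mu_num f y = ereal (1 + cmod (Tf zsP zsQ y))" using mu[OF y0 py qy] .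
        then show ?thesis using qy le unfolding mx by simp
      qed
      show ?thesis using good by auto
    qed
  qed
  show ?thesis unfolding amenable_def f_def[symmetric]
    apply (rule exI[of _ C]) using C8 main by simp
qed

end
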